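(* Let $(m_1,n_1)$ and $(m_2,n_2)$ be allowable pairs such that the sets $\{|t_1(m_1,n_1)|,|t_2(m_1,n_1)|,|t_3(m_1,n_1)|\}$ and $\{|t_1(m_2,n_2)|,|t_2(m_2,n_2)|,|t_3(m_2,n_2)|\}$ coincide. Then $c_1=-\frac{A(m_1,n_1)}{B(m_1,n_1)}$ equals $c_2=-\frac{A(m_2,n_2)}{B(m_2,n_2)}$. In other words, the absolute values of the numerators of the elements of the rational $3$-cycle of $f_c(x)=x^2+c$ determine $c$.
   Context: An allowable pair is $(m,n)\in\mathbb{Z}^2$ with $\gcd(m,n)=1$ and $mn(m+n)\neq0$. $t_1(m,n)=m^3+2m^2n+mn^2+n^3$, $t_2(m,n)=m^3-mn^2-n^3$, $t_3(m,n)=m^3+2m^2n+3mn^2+n^3$; $A(m,n)=m^6+2m^5n+4m^4n^2+8m^3n^3+9m^2n^4+4mn^5+n^6$, $B(m,n)=4m^2n^2(m+n)^2$. For an allowable pair, $f_c$ with $c=-A/B$ has the rational $3$-cycle $\{\frac{t_1}{2mn(m+n)},\frac{t_2}{2mn(m+n)},-\frac{t_3}{2mn(m+n)}\}$, fractions in lowest terms. *)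

theory Defs
  imports Complex_Main
begin

definition allowable :: "int \<Rightarrow> int \<Rightarrow> bool" where
  "allowable m n \<longleftrightarrow> gcd m n = 1 \<and> m * n * (m + n) \<noteq> 0"

definition t1 :: "int \<Rightarrow> int \<Rightarrow> int" where
  "t1 m n = m^3 + 2*m^2*n + m*n^2 + n^3"

definition t2 :: "int \<Rightarrow> int \<Rightarrow> int" where
  "t2 m n = m^3 - m*n^2 - n^3"

definition t3 :: "int \<Rightarrow> int \<Rightarrow> int" where
  "t3 m n = m^3 + 2*m^2*n + 3*m*n^2 + n^3"

definition A :: "int \<Rightarrow> int \<Rightarrow> int" where
  "A m n = m^6 + 2*m^5*n + 4*m^4*n^2 + 8*m^3*n^3 + 9*m^2*n^4 + 4*m*n^5 + n^6"

definition B :: "int \<Rightarrow> int \<Rightarrow> int" where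
  "B m n = 4*m^2*n^2*(m+n)^2"

definition cval :: "int \<Rightarrow> int \<Rightarrow> rat" where
  "cval m n = - (of_int (A m n) / of_int (B m n))"

end

theory Submission
  imports Defs
begin

lemma signL:
  fixes c1 c2 c3 b1 b2 b3 N e1 e2 e3 :: int
  assumes e: "e1 = 1 \<or> e1 = -1" "e2 = 1 \<or> e2 = -1" "e3 = 1 \<or> e3 = -1"
  and b: "b1 = e1*c1" "b2 = e2*c2" "b3 = e3*c3"
  and n1: "N dvd c1 - c2" "N dvd c2 - c3" "N dvd c1 - c3" "N dvd c2 - c1" "N dvd c3 - c2" "N dvd c3 - c1"
  and n2: "\<not> N^2 dvd c1 - c2" "\<not> N^2 dvd c2 - c3" "\<not> N^2 dvd c1 - c3" "\<not> N^2 dvd c2 - c1" "\<not> N^2 dvd c3 - c2" "\<not> N^2 dvd c3 - c1"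
  and h1: "N dvd b1 + b2 \<Longrightarrow> N dvd b2 + b3 \<Longrightarrow> N^2 dvd b1 + b2 \<or> N^2 dvd b2 + b3"
  and h2: "N dvd b2 + b3 \<Longrightarrow> N dvd b3 + b1 \<Longrightarrow> N^2 dvd b2 + b3 \<or> N^2 dvd b3 + b1"
  and h3: "N dvd b1 + b2 \<Longrightarrow> N dvd b3 + b1 \<Longrightarrow> N^2 dvd b1 + b2 \<or> N^2 dvd b3 + b1"
  shows "(b1 = c1 \<and> b2 = c2 \<and> b3 = c3) \<or> (b1 = -c1 \<and> b2 = -c2 \<and> b3 = -c3)"
  using e
  apply (elim disjE)
  using b n1 n2 h1 h2 h3 by simp_all

lemma comb:
  fixes a1 a2 a3 b1 b2 b3 N :: int
  assumes b1: "\<bar>b1\<bar> = \<bar>a1\<bar> \<or> \<bar>b1\<bar> = \<bar>a2\<bar> \<or> \<bar>b1\<bar> = \<bar>a3\<bar>"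
  and b2: "\<bar>b2\<bar> = \<bar>a1\<bar> \<or> \<bar>b2\<bar> = \<bar>a2\<bar> \<or> \<bar>b2\<bar> = \<bar>a3\<bar>"
  and b3: "\<bar>b3\<bar> = \<bar>a1\<bar> \<or> \<bar>b3\<bar> = \<bar>a2\<bar> \<or> \<bar>b3\<bar> = \<bar>a3\<bar>"
  and d: "\<bar>b1\<bar> \<noteq> \<bar>b2\<bar>" "\<bar>b1\<bar> \<noteq> \<bar>b3\<bar>" "\<bar>b2\<bar> \<noteq> \<bar>b3\<bar>"
  and n1: "N dvd a1 - a2" "N dvd a2 - a3" "N dvd a1 - a3"
  and n2: "\<not> N^2 dvd a1 - a2" "\<not> N^2 dvd a2 - a3" "\<not> N^2 dvd a1 - a3"
  and h1: "N dvd b1 + b2 \<Longrightarrow> N dvd b2 + b3 \<Longrightarrow> N^2 dvd b1 + b2 \<or> N^2 dvd b2 + b3"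
  and h2: "N dvd b2 + b3 \<Longrightarrow> N dvd b3 + b1 \<Longrightarrow> N^2 dvd b2 + b3 \<or> N^2 dvd b3 + b1"
  and h3: "N dvd b1 + b2 \<Longrightarrow> N dvd b3 + b1 \<Longrightarrow> N^2 dvd b1 + b2 \<or> N^2 dvd b3 + b1"
  shows "(b1^2+b2^2+b3^2 = a1^2+a2^2+a3^2 \<and> b1+b2+b3 = a1+a2+a3 \<and> (b1+b2)*(b2+b3)*(b3+b1) = (a1+a2)*(a2+a3)*(a3+a1))
       \<or> (b1^2+b2^2+b3^2 = a1^2+a2^2+a3^2 \<and> b1+b2+b3 = -(a1+a2+a3) \<and> (b1+b2)*(b2+b3)*(b3+b1) = -((a1+a2)*(a2+a3)*(a3+a1)))"
proof -
  have ex: "\<exists>e c. (e = 1 \<or> e = -1) \<and> (c = a1 \<or> c = a2 \<or> c = a3) \<and> b = e * c"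
    if "\<bar>b\<bar> = \<bar>a1\<bar> \<or> \<bar>b\<bar> = \<bar>a2\<bar> \<or> \<bar>b\<bar> = \<bar>a3\<bar>" for b
  proof -
    from that obtain c where c: "c = a1 \<or> c = a2 \<or> c = a3" "\<bar>b\<bar> = \<bar>c\<bar>" by blast
    then have "b = 1 * c \<or> b = (-1) * c" by (cases "b \<ge> 0"; cases "c \<ge> 0") auto
    with c(1) show ?thesis by blast
  qed
  obtain e1 c1 where E1: "e1 = 1 \<or> e1 = -1" "c1 = a1 \<or> c1 = a2 \<or> c1 = a3" "b1 = e1 * c1" using ex[OF b1] by blast
  obtain e2 c2 where E2: "e2 = 1 \<or> e2 = -1" "c2 = a1 \<or> c2 = a2 \<or> c2 = a3" "b2 = e2 * c2" using ex[OF b2] by blast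
  obtain e3 c3 where E3: "e3 = 1 \<or> e3 = -1" "c3 = a1 \<or> c3 = a2 \<or> c3 = a3" "b3 = e3 * c3" using ex[OF b3] by blast
  have ab: "\<bar>b1\<bar> = \<bar>c1\<bar>" "\<bar>b2\<bar> = \<bar>c2\<bar>" "\<bar>b3\<bar> = \<bar>c3\<bar>"
    using E1 E2 E3 by (auto simp: abs_mult)
  have dc: "c1 \<noteq> c2" "c1 \<noteq> c3" "c2 \<noteq> c3" using d ab by auto
  have gen: "N dvd x - y \<and> \<not> N^2 dvd x - y" if "x = a1 \<or> x = a2 \<or> x = a3" "y = a1 \<or> y = a2 \<or> y = a3" "x \<noteq> y" for x y
  proof -
    have m1: "N dvd a2 - a1" "N dvd a3 - a2" "N dvd a3 - a1"
      using n1 by (metis dvd_minus_iff minus_diff_eq)+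
    have m2: "\<not> N^2 dvd a2 - a1" "\<not> N^2 dvd a3 - a2" "\<not> N^2 dvd a3 - a1"
      using n2 by (metis dvd_minus_iff minus_diff_eq)+
    show ?thesis using that n1 n2 m1 m2 by auto
  qed
  have s: "(b1 = c1 \<and> b2 = c2 \<and> b3 = c3) \<or> (b1 = -c1 \<and> b2 = -c2 \<and> b3 = -c3)"
    apply (rule signL[OF E1(1) E2(1) E3(1) E1(3) E2(3) E3(3)])
    using gen[OF E1(2) E2(2)] gen[OF E2(2) E3(2)] gen[OF E1(2) E3(2)]
      gen[OF E2(2) E1(2)] gen[OF E3(2) E2(2)] gen[OF E3(2) E1(2)] dc h1 h2 h3 by auto
  show ?thesis
    using E1(2) E2(2) E3(2) dc s
    apply (elim disjE)
    by (simp_all add: algebra_simps)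
qed

lemma cop_basic:
  fixes m n :: int assumes "allowable m n"
  shows "coprime m n" "coprime m (m+n)" "coprime n (m+n)" "m \<noteq> 0" "n \<noteq> 0" "m + n \<noteq> 0"
proof -
  show c: "coprime m n" using assms unfolding allowable_def by (simp add: coprime_iff_gcd_eq_1)
  show "coprime m (m+n)" using c by (simp add: coprime_iff_gcd_eq_1)
  show "coprime n (m+n)" using c by (metis add.commute gcd_add2 coprime_iff_gcd_eq_1 gcd.commute)
  show "m \<noteq> 0" "n \<noteq> 0" "m + n \<noteq> 0" using assms unfolding allowable_def by auto
qed

lemma N_props:
  fixes m n :: int assumes "allowable m n"
  defines "N \<equiv> m^2 + m*n + n^2"
  shows "odd N" "N > 1" "coprime N m" "coprime N n" "coprime N (m+n)"
proof -
  note c = cop_basic[OF assms(1)]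
  have ne: "\<not> (even m \<and> even n)"
  proof
    assume "even m \<and> even n"
    then have "2 dvd gcd m n" by auto
    with c(1) show False by (simp add: coprime_iff_gcd_eq_1)
  qed
  then show "odd N" unfolding N_def by (auto simp: power2_eq_square)
  have "2*N = m^2 + n^2 + (m+n)^2" unfolding N_def by (simp add: power2_eq_square algebra_simps)
  moreover have "m^2 \<ge> 1" "n^2 \<ge> 1" "(m+n)^2 \<ge> 1" using c(4-6)
    by (simp_all add: power2_eq_square) (smt (verit) mult_le_cancel_right1 zero_less_mult_iff)+
  ultimately show "N > 1" by linarith
  have "gcd m ((m+n)*m + n^2) = gcd m (n^2)" by (rule gcd_add_mult)
  moreover have "coprime m (n^2)" using c(1) by simp
  moreover have "N = (m+n)*m + n^2" unfolding N_def by (simp add: power2_eq_square algebra_simps)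
  ultimately show "coprime N m"
    by (metis coprime_commute coprime_iff_gcd_eq_1)
  have "gcd n ((m+n)*n + m^2) = gcd n (m^2)" by (rule gcd_add_mult)
  moreover have "coprime n (m^2)" using c(1) by (simp add: coprime_commute)
  moreover have "N = (m+n)*n + m^2" unfolding N_def by (simp add: power2_eq_square algebra_simps)
  ultimately show "coprime N n"
    by (metis coprime_commute coprime_iff_gcd_eq_1)
  have "gcd (m+n) ((m+n)*(m+n) + (-(m*n))) = gcd (m+n) (-(m*n))" by (rule gcd_add_mult)
  moreover have "coprime (m+n) (-(m*n))" using c by (simp add: coprime_commute)
  moreover have "N = (m+n)*(m+n) + (-(m*n))" unfolding N_def by (simp add: power2_eq_square algebra_simps)
  ultimately show "coprime N (m+n)"
    by (metis coprime_commute coprime_iff_gcd_eq_1)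
qed

lemma sq_dvd_core:
  fixes m n d :: int assumes "allowable m n"
  shows "d dvd m^2*(m+n) \<Longrightarrow> d dvd n*(m+n)^2 \<Longrightarrow> d^2 dvd m^2*(m+n) \<or> d^2 dvd n*(m+n)^2"
    and "d dvd n*(m+n)^2 \<Longrightarrow> d dvd m*n^2 \<Longrightarrow> d^2 dvd n*(m+n)^2 \<or> d^2 dvd m*n^2"
    and "d dvd m^2*(m+n) \<Longrightarrow> d dvd m*n^2 \<Longrightarrow> d^2 dvd m^2*(m+n) \<or> d^2 dvd m*n^2"
proof -
  note c = cop_basic[OF assms]
  have cp: "coprime x y \<Longrightarrow> d dvd x \<Longrightarrow> coprime d y" for x y :: int
    using coprime_divisors[of d x y y] by simp
  {
    assume h1: "d dvd m^2*(m+n)" and h2: "d dvd n*(m+n)^2"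
    have "coprime (n*(m+n)^2) m" using c by (simp add: coprime_commute)
    from cp[OF this h2] have "coprime d (m^2)" by simp
    then have "d dvd m+n" using h1 by (simp add: coprime_dvd_mult_right_iff)
    then have "d^2 dvd (m+n)^2" by (rule dvd_power_same)
    then show "d^2 dvd m^2*(m+n) \<or> d^2 dvd n*(m+n)^2" by simp
  }
  {
    assume h1: "d dvd n*(m+n)^2" and h2: "d dvd m*n^2"
    have "coprime (m*n^2) (m+n)" using c by (simp add: coprime_commute)
    from cp[OF this h2] have "coprime d ((m+n)^2)" by simp
    then have "d dvd n" using h1 by (simp add: coprime_dvd_mult_left_iff)
    then have "d^2 dvd n^2" by (rule dvd_power_same)
    then show "d^2 dvd n*(m+n)^2 \<or> d^2 dvd m*n^2" by simp
  }
  {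
    assume h1: "d dvd m^2*(m+n)" and h2: "d dvd m*n^2"
    have "coprime (m^2*(m+n)) n" using c by (simp add: coprime_commute)
    from cp[OF this h1] have "coprime d n" by simp
    then have "coprime d (n^2)" by simp
    then have "d dvd m" using h2 by (simp add: coprime_dvd_mult_left_iff)
    then have "d^2 dvd m^2" by (rule dvd_power_same)
    then show "d^2 dvd m^2*(m+n) \<or> d^2 dvd m*n^2" by simp
  }
qed

lemma cube_inj: fixes x y :: int assumes "x^3 = y^3" shows "x = y"
proof -
  have "real_of_int x = root 3 (real_of_int x ^ 3)" by (simp add: odd_real_root_power_cancel)
  also have "real_of_int x ^ 3 = real_of_int y ^ 3" using assms by (metis of_int_power)
  also have "root 3 (real_of_int y ^ 3) = real_of_int y" by (simp add: odd_real_root_power_cancel)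
  finally show ?thesis by simp
qed

lemma ids:
  fixes m n :: int
  defines "N \<equiv> m^2 + m*n + n^2" and "D \<equiv> 2*m*n*(m+n)"
  shows "t1 m n - t2 m n = 2*n*N" "t2 m n - (- t3 m n) = 2*m*N" "t1 m n - (- t3 m n) = 2*(m+n)*N"
    "t1 m n + t2 m n = 2*(m^2*(m+n))" "t2 m n + (- t3 m n) = - (2*(n*(m+n)^2))"
    "(- t3 m n) + t1 m n = - (2*(m*n^2))"
    "3 * A m n = (t1 m n)^2 + (t2 m n)^2 + (- t3 m n)^2 - D * (t1 m n + t2 m n + (- t3 m n))"
    "D^3 = (t1 m n + t2 m n) * (t2 m n + (- t3 m n)) * ((- t3 m n) + t1 m n)"
    "B m n = D^2"
  unfolding N_def D_def t1_def t2_def t3_def A_def B_def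
  by algebra+

lemma pair_distinct:
  fixes m n :: int assumes "allowable m n"
  shows "\<bar>t1 m n\<bar> \<noteq> \<bar>t2 m n\<bar>" "\<bar>t1 m n\<bar> \<noteq> \<bar>- t3 m n\<bar>" "\<bar>t2 m n\<bar> \<noteq> \<bar>- t3 m n\<bar>"
proof -
  note c = cop_basic[OF assms]
  note np = N_props[OF assms]
  note i = ids[of m n]
  have ab: "\<bar>x\<bar> \<noteq> \<bar>y\<bar>" if "x - y \<noteq> 0" "x + y \<noteq> 0" for x y :: int
    using that by linarith
  show "\<bar>t1 m n\<bar> \<noteq> \<bar>t2 m n\<bar>" by (rule ab) (use i c np in auto)
  show "\<bar>t1 m n\<bar> \<noteq> \<bar>- t3 m n\<bar>" by (rule ab) (use i c np in auto)
  show "\<bar>t2 m n\<bar> \<noteq> \<bar>- t3 m n\<bar>" by (rule ab) (use i c np in auto)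
qed

lemma hb:
  fixes m n d :: int assumes "allowable m n" "odd d"
  defines "b1 \<equiv> t1 m n" and "b2 \<equiv> t2 m n" and "b3 \<equiv> - t3 m n"
  shows "d dvd b1 + b2 \<Longrightarrow> d dvd b2 + b3 \<Longrightarrow> d^2 dvd b1 + b2 \<or> d^2 dvd b2 + b3"
    and "d dvd b2 + b3 \<Longrightarrow> d dvd b3 + b1 \<Longrightarrow> d^2 dvd b2 + b3 \<or> d^2 dvd b3 + b1"
    and "d dvd b1 + b2 \<Longrightarrow> d dvd b3 + b1 \<Longrightarrow> d^2 dvd b1 + b2 \<or> d^2 dvd b3 + b1"
proof -
  have c2: "coprime d 2" using assms(2) by (simp add: coprime_commute)
  have c22: "coprime (d^2) 2" using c2 by simp
  have r: "d dvd 2*x \<longleftrightarrow> d dvd x" "d^2 dvd 2*x \<longleftrightarrow> d^2 dvd x" for x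
    using c2 c22 by (simp_all add: coprime_dvd_mult_right_iff coprime_dvd_mult_left_iff)
  note i = ids[of m n]
  note s = sq_dvd_core[OF assms(1), of d]
  show "d dvd b1 + b2 \<Longrightarrow> d dvd b2 + b3 \<Longrightarrow> d^2 dvd b1 + b2 \<or> d^2 dvd b2 + b3"
    using s(1) unfolding b1_def b2_def b3_def i(4,5) by (simp add: r)
  show "d dvd b2 + b3 \<Longrightarrow> d dvd b3 + b1 \<Longrightarrow> d^2 dvd b2 + b3 \<or> d^2 dvd b3 + b1"
    using s(2) unfolding b1_def b2_def b3_def i(5,6) by (simp add: r)
  show "d dvd b1 + b2 \<Longrightarrow> d dvd b3 + b1 \<Longrightarrow> d^2 dvd b1 + b2 \<or> d^2 dvd b3 + b1"
    using s(3) unfolding b1_def b2_def b3_def i(4,6) by (simp add: r)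
qed

lemma not_sq:
  fixes m n x :: int assumes "allowable m n" and "x = m \<or> x = n \<or> x = m + n"
  shows "\<not> (m^2+m*n+n^2)^2 dvd 2*x*(m^2+m*n+n^2)"
proof
  define N where "N = m^2+m*n+n^2"
  note np = N_props[OF assms(1), folded N_def]
  assume "(m^2+m*n+n^2)^2 dvd 2*x*(m^2+m*n+n^2)"
  then have "N * N dvd (2*x) * N" by (simp add: N_def power2_eq_square)
  then have "N dvd 2*x" using np(2) by (metis dvd_mult_cancel_right mult.commute not_one_less_zero mult_cancel_left2 dvd_times_right_cancel_iff less_irrefl)
  moreover have "coprime N 2" using np(1) by (simp add: coprime_commute)
  ultimately have "N dvd x" by (simp add: coprime_dvd_mult_right_iff)
  moreover have "coprime N x" using assms(2) np(3-5) by auto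
  ultimately have "is_unit N" by (metis coprime_common_divisor dvd_refl)
  then show False using np(2) by simp
qed

theorem theorem9:
  fixes m1 n1 m2 n2 :: int
  assumes "allowable m1 n1" and "allowable m2 n2"
    and "{\<bar>t1 m1 n1\<bar>, \<bar>t2 m1 n1\<bar>, \<bar>t3 m1 n1\<bar>} = {\<bar>t1 m2 n2\<bar>, \<bar>t2 m2 n2\<bar>, \<bar>t3 m2 n2\<bar>}"
  shows "cval m1 n1 = cval m2 n2"
proof -
  define a1 a2 a3 where "a1 = t1 m1 n1" "a2 = t2 m1 n1" "a3 = - t3 m1 n1"
  define b1 b2 b3 where "b1 = t1 m2 n2" "b2 = t2 m2 n2" "b3 = - t3 m2 n2"
  define N where "N = m1^2 + m1*n1 + n1^2"
  define D1 where "D1 = 2*m1*n1*(m1+n1)"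
  define D2 where "D2 = 2*m2*n2*(m2+n2)"
  have S: "{\<bar>a1\<bar>, \<bar>a2\<bar>, \<bar>a3\<bar>} = {\<bar>b1\<bar>, \<bar>b2\<bar>, \<bar>b3\<bar>}"
    using assms(3) unfolding a1_a2_a3_def b1_b2_b3_def by simp
  have B: "\<bar>b1\<bar> = \<bar>a1\<bar> \<or> \<bar>b1\<bar> = \<bar>a2\<bar> \<or> \<bar>b1\<bar> = \<bar>a3\<bar>"
    "\<bar>b2\<bar> = \<bar>a1\<bar> \<or> \<bar>b2\<bar> = \<bar>a2\<bar> \<or> \<bar>b2\<bar> = \<bar>a3\<bar>"
    "\<bar>b3\<bar> = \<bar>a1\<bar> \<or> \<bar>b3\<bar> = \<bar>a2\<bar> \<or> \<bar>b3\<bar> = \<bar>a3\<bar>"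
    using S by (metis insertCI insertE singletonD)+
  have d: "\<bar>b1\<bar> \<noteq> \<bar>b2\<bar>" "\<bar>b1\<bar> \<noteq> \<bar>b3\<bar>" "\<bar>b2\<bar> \<noteq> \<bar>b3\<bar>"
    using pair_distinct[OF assms(2)] unfolding b1_b2_b3_def by auto
  note i1 = ids[of m1 n1, folded N_def D1_def a1_a2_a3_def]
  note i2 = ids[of m2 n2, folded D2_def b1_b2_b3_def]
  have n1: "N dvd a1 - a2" "N dvd a2 - a3" "N dvd a1 - a3"
    unfolding i1 by simp_all
  have n2: "\<not> N^2 dvd a1 - a2" "\<not> N^2 dvd a2 - a3" "\<not> N^2 dvd a1 - a3"
  proof -
    have ns: "\<not> N^2 dvd 2*x*N" if "x = m1 \<or> x = n1 \<or> x = m1 + n1" for x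
      unfolding N_def by (rule not_sq[OF assms(1) that])
    show "\<not> N^2 dvd a1 - a2" unfolding i1(1) by (rule ns) simp
    show "\<not> N^2 dvd a2 - a3" unfolding i1(2) by (rule ns) simp
    show "\<not> N^2 dvd a1 - a3" unfolding i1(3) by (rule ns) simp
  qed
  have oN: "odd N" unfolding N_def using N_props(1)[OF assms(1)] .
  note h = hb[OF assms(2) oN, folded b1_b2_b3_def]
  have C: "(b1^2+b2^2+b3^2 = a1^2+a2^2+a3^2 \<and> b1+b2+b3 = a1+a2+a3 \<and> (b1+b2)*(b2+b3)*(b3+b1) = (a1+a2)*(a2+a3)*(a3+a1))
       \<or> (b1^2+b2^2+b3^2 = a1^2+a2^2+a3^2 \<and> b1+b2+b3 = -(a1+a2+a3) \<and> (b1+b2)*(b2+b3)*(b3+b1) = -((a1+a2)*(a2+a3)*(a3+a1)))"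
    by (rule comb[OF B d n1 n2 h])
  have AB: "A m1 n1 = A m2 n2 \<and> B m1 n1 = B m2 n2"
  proof (rule disjE[OF C])
    assume c: "b1^2+b2^2+b3^2 = a1^2+a2^2+a3^2 \<and> b1+b2+b3 = a1+a2+a3 \<and> (b1+b2)*(b2+b3)*(b3+b1) = (a1+a2)*(a2+a3)*(a3+a1)"
    have "D2^3 = D1^3" using c i1(8) i2(8) by simp
    then have "D2 = D1" by (rule cube_inj)
    then show ?thesis using c i1(7,9) i2(7,9) by simp
  next
    assume c: "b1^2+b2^2+b3^2 = a1^2+a2^2+a3^2 \<and> b1+b2+b3 = -(a1+a2+a3) \<and> (b1+b2)*(b2+b3)*(b3+b1) = -((a1+a2)*(a2+a3)*(a3+a1))"
    have "D2^3 = (-D1)^3" using c i1(8) i2(8) by simp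
    then have "D2 = -D1" by (rule cube_inj)
    have e1: "b1^2+b2^2+b3^2 = a1^2+a2^2+a3^2" and e2: "b1+b2+b3 = -(a1+a2+a3)" using c by auto
    have "3*A m2 n2 = (b1^2+b2^2+b3^2) - D2*(b1+b2+b3)" using i2(7) by simp
    also have "\<dots> = (a1^2+a2^2+a3^2) - (-D1)*(-(a1+a2+a3))" by (simp only: e1 e2 \<open>D2 = -D1\<close>)
    also have "\<dots> = 3*A m1 n1" using i1(7) by (simp add: algebra_simps)
    finally have "3 * A m1 n1 = 3 * A m2 n2" by simp
    moreover have "B m1 n1 = B m2 n2" using \<open>D2 = -D1\<close> i1(9) i2(9) by simp
    ultimately show ?thesis by simp
  qed
  then show ?thesis unfolding cval_def by simp
qed

end
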